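(* Let $G$ be a finite simple graph with no induced banner, and let $H$ be a homogeneous set of $G$. Then $G$ contains no induced odd hole if and only if both $G[H]$ and $G[(V(G)\setminus H) \cup \{h\}]$ contain no induced odd hole, for any vertex $h \in H$.
   Context: A hole is a chordless (induced) cycle with at least four vertices; it is odd if it has an odd number of vertices. A banner is the graph consisting of a hole on four vertices together with one additional vertex adjacent to exactly one vertex of that hole. A set $H \subseteq V(G)$ is homogeneous if $2 \leq |H| < |V(G)|$ and every vertex of $V(G)\setminus H$ is adjacent either to all of $H$ or to none of $H$. *)

theory Defs
  imports Main
begin

text \<open>A finite simple graph: finite vertex set V and a symmetric, irreflexive
adjacency relation E (only its restriction to V matters).
The induced subgraph G[S] is represented by the pair (S, E).\<close>

definition simple_graph :: "'a set \<Rightarrow> ('a \<Rightarrow> 'a \<Rightarrow> bool) \<Rightarrow> bool" where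
  "simple_graph V E \<longleftrightarrow> finite V \<and> (\<forall>x\<in>V. \<forall>y\<in>V. E x y \<longleftrightarrow> E y x) \<and> (\<forall>x\<in>V. \<not> E x x)"

definition is_hole :: "'a set \<Rightarrow> ('a \<Rightarrow> 'a \<Rightarrow> bool) \<Rightarrow> 'a list \<Rightarrow> bool" where
  "is_hole V E vs \<longleftrightarrow> length vs \<ge> 4 \<and> distinct vs \<and> set vs \<subseteq> V \<and>
     (\<forall>i<length vs. \<forall>j<length vs.
        E (vs ! i) (vs ! j) \<longleftrightarrow> (j = Suc i mod length vs \<or> i = Suc j mod length vs))"

definition has_odd_hole :: "'a set \<Rightarrow> ('a \<Rightarrow> 'a \<Rightarrow> bool) \<Rightarrow> bool" where
  "has_odd_hole V E \<longleftrightarrow> (\<exists>vs. is_hole V E vs \<and> odd (length vs))"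

definition has_banner :: "'a set \<Rightarrow> ('a \<Rightarrow> 'a \<Rightarrow> bool) \<Rightarrow> bool" where
  "has_banner V E \<longleftrightarrow> (\<exists>a b c d e. is_hole V E [a, b, c, d] \<and> e \<in> V \<and>
      e \<notin> {a, b, c, d} \<and> E e a \<and> \<not> E e b \<and> \<not> E e c \<and> \<not> E e d)"

definition homogeneous :: "'a set \<Rightarrow> ('a \<Rightarrow> 'a \<Rightarrow> bool) \<Rightarrow> 'a set \<Rightarrow> bool" where
  "homogeneous V E H \<longleftrightarrow> H \<subseteq> V \<and> 2 \<le> card H \<and> card H < card V \<and>
     (\<forall>v \<in> V - H. (\<forall>h\<in>H. E v h) \<or> (\<forall>h\<in>H. \<not> E v h))"

end

theory Submission
  imports Defs
begin

lemma modfacts: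
  fixes n i j :: nat
  assumes "n \<ge> 5" "i < n" "j < n" "i = Suc j mod n"
  shows "Suc (Suc i mod n) mod n \<noteq> Suc i mod n" "i \<noteq> Suc (Suc (Suc i mod n) mod n) mod n"
   "Suc (Suc i mod n) mod n \<noteq> Suc j mod n" "j \<noteq> Suc (Suc (Suc i mod n) mod n) mod n" "Suc (Suc i mod n) mod n \<noteq> i"
  using assms by (auto simp: mod_Suc split: if_splits)

lemma hole_mono: "is_hole S E vs \<Longrightarrow> S \<subseteq> T \<Longrightarrow> is_hole T E vs"
  unfolding is_hole_def by auto

lemma hole_restrict: "is_hole S E vs \<Longrightarrow> set vs \<subseteq> T \<Longrightarrow> is_hole T E vs"
  unfolding is_hole_def by auto

lemma transition:
  fixes vs :: "'a list"
  assumes "k < length vs" "vs ! k \<notin> H" "p < length vs" "vs ! p \<in> H"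
  shows "\<exists>i<length vs. vs ! i \<notin> H \<and> vs ! (Suc i mod length vs) \<in> H"
proof (rule ccontr)
  let ?n = "length vs"
  assume "\<not> ?thesis"
  hence st: "\<And>i. i < ?n \<Longrightarrow> vs ! i \<notin> H \<Longrightarrow> vs ! (Suc i mod ?n) \<notin> H" by blast
  have "vs ! ((k + m) mod ?n) \<notin> H" for m
  proof (induction m)
    case 0 then show ?case using assms by simp
  next
    case (Suc m)
    have "(k + Suc m) mod ?n = Suc ((k + m) mod ?n) mod ?n" by (simp add: mod_Suc_eq)
    moreover have "(k + m) mod ?n < ?n" using assms(1) by (metis mod_less_divisor gr_zeroI less_zeroE)
    ultimately show ?case using st Suc by metis
  qed
  from this[of "p + ?n - k"] have "vs ! ((p + ?n) mod ?n) \<notin> H" using assms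
    by (metis add.commute le_add_diff_inverse2 less_imp_le trans_le_add2)
  thus False using assms by simp
qed

lemma no_mixed:
  assumes hom: "homogeneous V E H" and hole: "is_hole V E vs" and n5: "length vs \<ge> 5"
    and x: "x \<in> set vs" "x \<in> H" and y: "y \<in> set vs" "y \<in> H" and xy: "x \<noteq> y"
    and z: "z \<in> set vs" "z \<notin> H"
  shows False
proof -
  let ?n = "length vs"
  have adj: "\<And>i j. i < ?n \<Longrightarrow> j < ?n \<Longrightarrow> E (vs ! i) (vs ! j) \<longleftrightarrow> (j = Suc i mod ?n \<or> i = Suc j mod ?n)"
    using hole unfolding is_hole_def by blast
  have sub: "set vs \<subseteq> V" using hole unfolding is_hole_def by blast
  have homo: "\<And>v. v \<in> V - H \<Longrightarrow> (\<forall>h\<in>H. E v h) \<or> (\<forall>h\<in>H. \<not> E v h)"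
    using hom unfolding homogeneous_def by blast
  obtain k where k: "k < ?n" "vs ! k = z" using z by (metis in_set_conv_nth)
  obtain p where p: "p < ?n" "vs ! p = x" using x by (metis in_set_conv_nth)
  obtain i where i: "i < ?n" "vs ! i \<notin> H" "vs ! (Suc i mod ?n) \<in> H"
    using transition[of k vs H p] k p z x by auto
  have npos: "?n > 0" using n5 by linarith
  have si: "Suc i mod ?n < ?n" using npos by simp
  have Eva: "E (vs ! i) (vs ! (Suc i mod ?n))" using adj[OF i(1) si] by simp
  have vV: "vs ! i \<in> V - H" using sub i by auto
  have hv: "\<forall>h\<in>H. E (vs ! i) h" using homo[OF vV] Eva i(3) by blast
  obtain b where b: "b \<in> set vs" "b \<in> H" "b \<noteq> vs ! (Suc i mod ?n)" using x y xy by blast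
  obtain j where j: "j < ?n" "vs ! j = b" using b by (metis in_set_conv_nth)
  have "E (vs ! i) (vs ! j)" using hv b j by simp
  hence "j = Suc i mod ?n \<or> i = Suc j mod ?n" using adj[OF i(1) j(1)] by simp
  hence ij: "i = Suc j mod ?n" using b j by auto
  note mf = modfacts[OF n5 i(1) j(1) ij]
  let ?q = "Suc (Suc i mod ?n) mod ?n"
  have q: "?q < ?n" using npos by simp
  have "vs ! ?q \<notin> H"
  proof
    assume "vs ! ?q \<in> H"
    hence "E (vs ! i) (vs ! ?q)" using hv by simp
    thus False using adj[OF i(1) q] mf by simp
  qed
  hence qV: "vs ! ?q \<in> V - H" using sub q by auto
  have "E (vs ! ?q) (vs ! (Suc i mod ?n))" using adj[OF q si] by simp
  hence "\<forall>h\<in>H. E (vs ! ?q) h" using homo[OF qV] i(3) by blast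
  hence "E (vs ! ?q) (vs ! j)" using b j by simp
  thus False using adj[OF q j(1)] mf by simp
qed

lemma replace_one:
  assumes sg: "simple_graph V E" and hom: "homogeneous V E H" and hole: "is_hole V E vs"
    and hH: "h \<in> H" and xs: "set vs \<inter> H = {x}"
  shows "is_hole ((V - H) \<union> {h}) E (map (\<lambda>y. if y = x then h else y) vs)"
proof -
  let ?f = "\<lambda>y. if y = x then h else y"
  let ?n = "length vs"
  have adj: "\<And>i j. i < ?n \<Longrightarrow> j < ?n \<Longrightarrow> E (vs ! i) (vs ! j) \<longleftrightarrow> (j = Suc i mod ?n \<or> i = Suc j mod ?n)"
    and sub: "set vs \<subseteq> V" and dist: "distinct vs" and len: "?n \<ge> 4"
    using hole unfolding is_hole_def by blast+
  have HV: "H \<subseteq> V" using hom unfolding homogeneous_def by blast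
  have homo: "\<And>v. v \<in> V - H \<Longrightarrow> (\<forall>h\<in>H. E v h) \<or> (\<forall>h\<in>H. \<not> E v h)"
    using hom unfolding homogeneous_def by blast
  have sym: "\<And>a b. a \<in> V \<Longrightarrow> b \<in> V \<Longrightarrow> E a b \<longleftrightarrow> E b a" and irr: "\<And>a. a \<in> V \<Longrightarrow> \<not> E a a"
    using sg unfolding simple_graph_def by blast+
  have xH: "x \<in> H" "x \<in> set vs" using xs by auto
  have inj: "inj_on ?f (set vs)"
  proof (rule inj_onI)
    fix a b assume a: "a \<in> set vs" and b: "b \<in> set vs" and e: "?f a = ?f b"
    show "a = b"
    proof (cases "a = x"; cases "b = x")
      assume "a = x" "b \<noteq> x"
      hence "b = h" using e by simp
      thus ?thesis using b hH xs \<open>b \<noteq> x\<close> by auto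
    next
      assume "a \<noteq> x" "b = x"
      hence "a = h" using e by simp
      thus ?thesis using a hH xs \<open>a \<noteq> x\<close> by auto
    qed (use e in auto)
  qed
  have keyE: "E (?f a) (?f b) \<longleftrightarrow> E a b" if a: "a \<in> set vs" and b: "b \<in> set vs" for a b
  proof (cases "a = x"; cases "b = x")
    assume "a = x" "b = x" thus ?thesis using irr HV hH xH by auto
  next
    assume ax: "a = x" and bx: "b \<noteq> x"
    hence bVH: "b \<in> V - H" using b xs sub by auto
    have "E b h \<longleftrightarrow> E b x" using homo[OF bVH] hH xH by blast
    moreover have "E b h \<longleftrightarrow> E h b" "E b x \<longleftrightarrow> E x b" using sym bVH HV hH xH by blast+
    ultimately show ?thesis using ax bx by simp
  next
    assume ax: "a \<noteq> x" and bx: "b = x"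
    hence aVH: "a \<in> V - H" using a xs sub by auto
    have "E a h \<longleftrightarrow> E a x" using homo[OF aVH] hH xH by blast
    thus ?thesis using ax bx by simp
  qed simp
  show ?thesis unfolding is_hole_def
  proof (intro conjI allI impI)
    show "4 \<le> length (map ?f vs)" using len by simp
    show "distinct (map ?f vs)" using dist inj by (simp add: distinct_map)
    show "set (map ?f vs) \<subseteq> V - H \<union> {h}" using sub xs by auto
  next
    fix i j assume "i < length (map ?f vs)" "j < length (map ?f vs)"
    hence ij: "i < ?n" "j < ?n" by auto
    have "E (map ?f vs ! i) (map ?f vs ! j) \<longleftrightarrow> E (vs ! i) (vs ! j)"
      using keyE[of "vs ! i" "vs ! j"] ij by simp
    thus "E (map ?f vs ! i) (map ?f vs ! j) =
         (j = Suc i mod length (map ?f vs) \<or> i = Suc j mod length (map ?f vs))"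
      using adj[OF ij] by simp
  qed
qed

theorem mainTheorem4:
  fixes V :: "'a set" and E :: "'a \<Rightarrow> 'a \<Rightarrow> bool" and H :: "'a set" and h :: 'a
  assumes "simple_graph V E"
    and "\<not> has_banner V E"
    and "homogeneous V E H"
    and "h \<in> H"
  shows "\<not> has_odd_hole V E \<longleftrightarrow>
           (\<not> has_odd_hole H E \<and> \<not> has_odd_hole ((V - H) \<union> {h}) E)"
proof
  have HV: "H \<subseteq> V" using assms(3) unfolding homogeneous_def by blast
  assume "\<not> has_odd_hole V E"
  thus "\<not> has_odd_hole H E \<and> \<not> has_odd_hole ((V - H) \<union> {h}) E"
  proof -
    have s: "(V - H) \<union> {h} \<subseteq> V" using HV assms(4) by blast
    show ?thesis using \<open>\<not> has_odd_hole V E\<close> hole_mono[OF _ s, of E] hole_mono[OF _ HV, of E]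
      unfolding has_odd_hole_def by blast
  qed
next
  assume nh: "\<not> has_odd_hole H E \<and> \<not> has_odd_hole ((V - H) \<union> {h}) E"
  show "\<not> has_odd_hole V E"
  proof
    assume "has_odd_hole V E"
    then obtain vs where hole: "is_hole V E vs" and od: "odd (length vs)" unfolding has_odd_hole_def by blast
    have "length vs \<ge> 4" using hole unfolding is_hole_def by blast
    hence n5: "length vs \<ge> 5" using od by presburger
    have sub: "set vs \<subseteq> V" using hole unfolding is_hole_def by blast
    show False
    proof (cases "set vs \<subseteq> H")
      case True
      thus False using nh hole_restrict[OF hole True] od unfolding has_odd_hole_def by blast
    next
      case False
      then obtain z where z: "z \<in> set vs" "z \<notin> H" by blast
      show False
      proof (cases "set vs \<inter> H = {}")
        case True
        hence "set vs \<subseteq> (V - H) \<union> {h}" using sub by auto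
        thus False using nh hole_restrict[OF hole] od unfolding has_odd_hole_def by blast
      next
        case False
        then obtain x where x: "x \<in> set vs" "x \<in> H" by blast
        show False
        proof (cases "set vs \<inter> H = {x}")
          case True
          have "is_hole ((V - H) \<union> {h}) E (map (\<lambda>y. if y = x then h else y) vs)"
            using replace_one[OF assms(1) assms(3) hole assms(4) True] .
          thus False using nh od unfolding has_odd_hole_def by fastforce
        next
          case False
          then obtain y where y: "y \<in> set vs" "y \<in> H" "y \<noteq> x" using x by blast
          show False using no_mixed[OF assms(3) hole n5 x y(1,2) y(3)[symmetric] z] .
        qed
      qed
    qed
  qed
qed

end
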